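(* Consider Method 1.1 (described in the context) and assume in addition: $f$ is convex; each $f_j$ is strongly convex with constant $\mu_j>0$; $D$ satisfies the Slater condition; no point of absolute minimum of $f$ on $\mathbb{R}^n$ (if any) lies in $\operatorname{int}D$. Then $X^*=\{x^*\}$ is a singleton, and, provided the generated sequence $\{y_i\}$ is bounded, every constructed point $x_k$ satisfies $\|x_k-x^*\|\le\sqrt{\varepsilon_k/\mu}$, where $\mu=\min_j\mu_j$; if moreover $f$ is Lipschitz with constant $L$, then also $|f(x_k)-f^*|\le L\sqrt{\varepsilon_k/\mu}$.
   Context: Setting: $f_j$, $j\in J=\{1,\dots,m\}$, are convex functions on $\mathbb{R}^n$; $D=\{x:f_j(x)\le0,\ j\in J\}$; $f$ is continuous and attains its minimum on $D$; each $D_j=\{x:f_j(x)\le0\}$ has nonempty interior. Notation: $K=\{0,1,\dots\}$; $F=\max_jf_j$; $D_\varepsilon=\{x:F(x)\le\varepsilon\}$; $f^*=\min_Df$; $X^*=\{x\in D:f(x)=f^*\}$; $E^*=\{x:f(x)\le f^*\}$; $W^1(x,D_j)=\{a:\|a\|=1,\ \langle a,z-x\rangle\le0\ \forall z\in D_j\}$. Method 1.1: fix $x^*\in X^*$; choose closed convex $M_0\ni x^*$, points $v^j\in\operatorname{int}D_j$, $\varepsilon_0\ge0$, a constant $q\ge1$; $k=i=0$. Step 1: choose $y_i\in M_i\cap E^*$. Step 2: $J_i=\{j:y_i\notin D_j\}$; stop if empty. Step 3: if $y_i\notin D_{\varepsilon_k}$, choose closed convex $G_i\ni x^*$, $Q_i=M_i\cap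 G_i$; else set $i_k=i$, $x_k=y_{i_k}$, choose closed convex $Q_i\ni x^*$, choose $\varepsilon_{k+1}\ge0$, $k\leftarrow k+1$. Step 4: for $j\in J_i$ choose $z_i^j\in(v^j,y_i)$, $z_i^j\notin\operatorname{int}D_j$, with $y_i+q_i^j(z_i^j-y_i)\in D_j$ for some $q_i^j\in[1,q]$; for $j\notin J_i$, $z_i^j=y_i$. Step 5: choose $H_i\subset J_i$ containing some $j_i$ maximizing $\|y_i-z_i^j\|$ over $J_i$. Step 6: for $j\in H_i$ choose nonempty finite $A_i^j\subset W^1(z_i^j,D_j)$; $M_{i+1}=Q_i\cap\{x:\langle a,x-z_i^j\rangle\le0\ \forall j\in H_i, a\in A_i^j\}$; $i\leftarrow i+1$, go to Step 1. *)

theory Defs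
  imports "HOL-Analysis.Analysis"
begin

text \<open>Strong convexity with constant mu (convention: g(t x + (1-t) y) \<le> t g x + (1-t) g y - mu t (1-t) |x-y|^2,
  i.e. g - mu |.|^2 is convex).\<close>
definition strongly_convex_on :: "'a::real_normed_vector set \<Rightarrow> real \<Rightarrow> ('a \<Rightarrow> real) \<Rightarrow> bool" where
  "strongly_convex_on S mu g \<longleftrightarrow> convex S \<and>
     (\<forall>x\<in>S. \<forall>y\<in>S. \<forall>t::real. 0 \<le> t \<and> t \<le> 1 \<longrightarrow>
        g (t *\<^sub>R x + (1 - t) *\<^sub>R y) \<le> t * g x + (1 - t) * g y - mu * t * (1 - t) * (norm (x - y))\<^sup>2)"

definition W1 :: "'a::real_inner \<Rightarrow> 'a set \<Rightarrow> 'a set" where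
  "W1 x S = {a. norm a = 1 \<and> (\<forall>z\<in>S. inner a (z - x) \<le> 0)}"

text \<open>A run of Method 1.1. Data:
  fs j (j \<in> {1..m}) constraint functions, f objective, xstar the fixed point of X*,
  M i, y i, Q i, G i, z i j, H i, A i j: the objects of iteration i;
  v j interior points, q the constant, eps k the tolerances,
  kk i the value of the counter k at the beginning of iteration i,
  N \<in> enat: the index of the iteration at which the method stops (\<infinity> if it never stops).
  Iterations i with i < N perform Steps 3--6; y i is defined for i \<le> N.\<close>
definition method11_run ::
  "nat \<Rightarrow> (nat \<Rightarrow> 'a::euclidean_space \<Rightarrow> real) \<Rightarrow> ('a \<Rightarrow> real) \<Rightarrow> 'a \<Rightarrow>
   (nat \<Rightarrow> 'a set) \<Rightarrow> (nat \<Rightarrow> 'a) \<Rightarrow> real \<Rightarrow> (nat \<Rightarrow> real) \<Rightarrow> (nat \<Rightarrow> nat) \<Rightarrow> enat \<Rightarrow>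
   (nat \<Rightarrow> 'a) \<Rightarrow> (nat \<Rightarrow> 'a set) \<Rightarrow> (nat \<Rightarrow> 'a set) \<Rightarrow> (nat \<Rightarrow> nat \<Rightarrow> 'a) \<Rightarrow>
   (nat \<Rightarrow> nat set) \<Rightarrow> (nat \<Rightarrow> nat \<Rightarrow> 'a set) \<Rightarrow> bool" where
  "method11_run m fs f xstar M v q eps kk N y Q G z H A \<longleftrightarrow>
    (let Dj = (\<lambda>j. {x. fs j x \<le> 0});
         F = (\<lambda>x. Max ((\<lambda>j. fs j x) ` {1..m}));
         D = {x. \<forall>j\<in>{1..m}. fs j x \<le> 0};
         fstar = Inf (f ` D);
         Estar = {x. f x \<le> fstar};
         J = (\<lambda>i. {j\<in>{1..m}. y i \<notin> Dj j})
     in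
      \<comment> \<open>initialisation\<close>
      closed (M 0) \<and> convex (M 0) \<and> xstar \<in> M 0 \<and>
      (\<forall>j\<in>{1..m}. v j \<in> interior (Dj j)) \<and>
      (\<forall>k. eps k \<ge> 0) \<and> q \<ge> 1 \<and> kk 0 = 0 \<and>
      \<comment> \<open>Step 1\<close>
      (\<forall>i. enat i \<le> N \<longrightarrow> y i \<in> M i \<inter> Estar) \<and>
      \<comment> \<open>Step 2: stop exactly when J_i is empty\<close>
      (\<forall>i. enat i \<le> N \<longrightarrow> (J i = {} \<longleftrightarrow> enat i = N)) \<and>
      (\<forall>i. enat i < N \<longrightarrow>
         \<comment> \<open>Step 3\<close>
         (F (y i) > eps (kk i) \<longrightarrow>
            closed (G i) \<and> convex (G i) \<and> xstar \<in> G i \<and> Q i = M i \<inter> G i \<and> kk (Suc i) = kk i) \<and>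
         (F (y i) \<le> eps (kk i) \<longrightarrow>
            closed (Q i) \<and> convex (Q i) \<and> xstar \<in> Q i \<and> kk (Suc i) = Suc (kk i)) \<and>
         \<comment> \<open>Step 4\<close>
         (\<forall>j\<in>J i. z i j \<in> open_segment (v j) (y i) \<and> z i j \<notin> interior (Dj j) \<and>
              (\<exists>qij. 1 \<le> qij \<and> qij \<le> q \<and> y i + qij *\<^sub>R (z i j - y i) \<in> Dj j)) \<and>
         (\<forall>j\<in>{1..m} - J i. z i j = y i) \<and>
         \<comment> \<open>Step 5\<close>
         H i \<subseteq> J i \<and>
         (\<exists>ji\<in>H i. \<forall>j\<in>J i. norm (y i - z i j) \<le> norm (y i - z i ji)) \<and>
         \<comment> \<open>Step 6\<close>
         (\<forall>j\<in>H i. finite (A i j) \<and> A i j \<noteq> {} \<and> A i j \<subseteq> W1 (z i j) (Dj j)) \<and>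
         M (Suc i) = Q i \<inter> {x. \<forall>j\<in>H i. \<forall>a\<in>A i j. inner a (x - z i j) \<le> 0}))"

end

theory Submission imports Defs begin
lemma loc_glob:
  fixes f :: "'a::euclidean_space \<Rightarrow> real"
  assumes cf: "convex_on UNIV f" and p: "p \<in> interior S" and mn: "\<forall>w\<in>S. f p \<le> f w"
  shows "f p \<le> f w"
proof (cases "w = p")
  case True then show ?thesis by simp
next
  case False
  obtain r where r: "r > 0" "ball p r \<subseteq> S" using p by (meson mem_interior)
  define s where "s = min 1 (r / (2 * norm (w - p)))"
  have np: "norm (w - p) > 0" using False by simp
  have s0: "s > 0" "s \<le> 1" using r np by (auto simp: s_def)
  define u where "u = (1 - s) *\<^sub>R p + s *\<^sub>R w"
  have "u - p = s *\<^sub>R (w - p)" by (simp add: u_def algebra_simps)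
  hence "dist p u = s * norm (w - p)" using s0 by (metis dist_commute dist_norm norm_scaleR abs_of_pos)
  also have "\<dots> \<le> r / (2 * norm (w - p)) * norm (w - p)"
    using np by (intro mult_right_mono) (auto simp: s_def)
  also have "\<dots> < r" using np r by simp
  finally have "u \<in> S" using r by auto
  hence "f p \<le> f u" using mn by auto
  also have "f u \<le> (1 - s) * f p + s * f w"
    unfolding u_def using cf s0 by (intro convex_onD) auto
  finally have "s * f p \<le> s * f w" by (simp add: algebra_simps)
  thus ?thesis using s0 by simp
qed

lemma open_neg:
  fixes g :: "nat \<Rightarrow> 'a::euclidean_space \<Rightarrow> real"
  assumes "finite I" "\<forall>j\<in>I. convex_on UNIV (g j)"
  shows "open {x. \<forall>j\<in>I. g j x < 0}"
proof -
  have "{x. \<forall>j\<in>I. g j x < 0} = (\<Inter>j\<in>I. {x. g j x < 0})" by auto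
  moreover have "open {x. g j x < 0}" if "j \<in> I" for j
    using that assms convex_on_continuous[of UNIV "g j"]
    by (intro open_Collect_less) auto
  ultimately show ?thesis using assms by (simp add: open_INT)
qed

theorem theorem1p1p4:
  fixes m :: nat and fs :: "nat \<Rightarrow> 'a::euclidean_space \<Rightarrow> real" and f :: "'a \<Rightarrow> real"
    and mu :: "nat \<Rightarrow> real" and xstar :: 'a
    and M :: "nat \<Rightarrow> 'a set" and v :: "nat \<Rightarrow> 'a" and q :: real and eps :: "nat \<Rightarrow> real"
    and kk :: "nat \<Rightarrow> nat" and N :: enat and y :: "nat \<Rightarrow> 'a"
    and Q G :: "nat \<Rightarrow> 'a set" and z :: "nat \<Rightarrow> nat \<Rightarrow> 'a" and H :: "nat \<Rightarrow> nat set"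
    and A :: "nat \<Rightarrow> nat \<Rightarrow> 'a set"
  defines "D \<equiv> {x. \<forall>j\<in>{1..m}. fs j x \<le> 0}"
  defines "fstar \<equiv> Inf (f ` D)"
  defines "Xstar \<equiv> {x\<in>D. f x = fstar}"
  defines "F \<equiv> (\<lambda>x. Max ((\<lambda>j. fs j x) ` {1..m}))"
  defines "mumin \<equiv> Min (mu ` {1..m})"
  assumes fs_convex: "\<forall>j\<in>{1..m}. convex_on UNIV (fs j)"
    and f_cont: "continuous_on UNIV f"
    and f_attains: "\<exists>x\<in>D. \<forall>w\<in>D. f x \<le> f w"
    and Dj_int: "\<forall>j\<in>{1..m}. interior {x. fs j x \<le> 0} \<noteq> {}"
    and f_convex: "convex_on UNIV f"
    and mu_pos: "\<forall>j\<in>{1..m}. mu j > 0"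
    and fs_strong: "\<forall>j\<in>{1..m}. strongly_convex_on UNIV (mu j) (fs j)"
    and slater: "\<exists>x. \<forall>j\<in>{1..m}. fs j x < 0"
    and no_abs_min_int: "\<forall>x. (\<forall>w. f x \<le> f w) \<longrightarrow> x \<notin> interior D"
    and xstar: "xstar \<in> Xstar"
    and run: "method11_run m fs f xstar M v q eps kk N y Q G z H A"
  shows "Xstar = {xstar} \<and>
    (bounded {y i | i. enat i \<le> N} \<longrightarrow>
       (\<forall>i. enat i < N \<and> F (y i) \<le> eps (kk i) \<longrightarrow>
          norm (y i - xstar) \<le> sqrt (eps (kk i) / mumin) \<and>
          (\<forall>L. L-lipschitz_on UNIV f \<longrightarrow> \<bar>f (y i) - fstar\<bar> \<le> L * sqrt (eps (kk i) / mumin))))"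
proof -
  obtain x0 where x0: "x0 \<in> D" "\<forall>w\<in>D. f x0 \<le> f w" using f_attains by blast
  have fstar_le: "fstar \<le> f w" if "w \<in> D" for w
    unfolding fstar_def using that x0 by (intro cInf_lower) (auto intro: bdd_belowI2)
  have xsD: "xstar \<in> D" and fxs: "f xstar = fstar" using xstar by (auto simp: Xstar_def)
  have m1: "m \<ge> 1"
  proof (rule ccontr)
    assume "\<not> m \<ge> 1"
    hence "D = UNIV" by (auto simp: D_def)
    thus False using x0 no_abs_min_int by auto
  qed
  have fin: "finite (mu ` {1..m})" "mu ` {1..m} \<noteq> {}" using m1 by auto
  have mupos: "mumin > 0" unfolding mumin_def using fin mu_pos by (subst Min_gr_iff) auto
  have mule: "mumin \<le> mu j" if "j \<in> {1..m}" for j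
    unfolding mumin_def using fin that by auto
  have opn: "open {x. \<forall>j\<in>{1..m}. fs j x < 0}" using fs_convex by (intro open_neg) auto
  have intD: "{x. \<forall>j\<in>{1..m}. fs j x < 0} \<subseteq> interior D"
    by (rule interior_maximal[OF _ opn]) (auto simp: D_def)
  have core: "mumin * (norm (w - xstar))\<^sup>2 \<le> e"
    if fw: "f w \<le> fstar" and fsw: "\<forall>j\<in>{1..m}. fs j w \<le> e" and e0: "e \<ge> 0" for w e
  proof (rule ccontr)
    assume nt: "\<not> mumin * (norm (w - xstar))\<^sup>2 \<le> e"
    define d2 where "d2 = (norm (w - xstar))\<^sup>2"
    have gt: "mumin * d2 > e" using nt by (simp add: d2_def)
    define t where "t = (mumin * d2 - e) / (2 * (mumin * d2))"
    have md: "mumin * d2 > 0" using gt e0 by linarith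
    have t0: "t > 0" using gt md by (simp add: t_def)
    have t1: "t \<le> 1/2" using md e0 by (simp add: t_def field_simps)
    have key: "(1 - t) * (mumin * d2) > e"
    proof -
      have "t * (mumin * d2) = (mumin * d2 - e) / 2" using md unfolding t_def by (auto simp: field_split_simps)
      hence "(1 - t) * (mumin * d2) = (mumin * d2 + e) / 2" by (simp add: algebra_simps)
      thus ?thesis using gt by simp
    qed
    define p where "p = t *\<^sub>R w + (1 - t) *\<^sub>R xstar"
    have fp: "f p \<le> fstar"
    proof -
      have "f ((1 - t) *\<^sub>R xstar + t *\<^sub>R w) \<le> (1 - t) * f xstar + t * f w"
        using f_convex t0 t1 by (intro convex_onD) auto
      hence "f p \<le> t * f w + (1 - t) * f xstar" unfolding p_def by (simp add: add.commute)
      also have "\<dots> \<le> t * fstar + (1 - t) * fstar" using fw fxs t0 t1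
        by (intro add_mono mult_left_mono) auto
      finally show ?thesis by (simp add: algebra_simps)
    qed
    have neg: "fs j p < 0" if j: "j \<in> {1..m}" for j
    proof -
      have "fs j p \<le> t * fs j w + (1 - t) * fs j xstar - mu j * t * (1 - t) * d2"
        using fs_strong j t0 t1 unfolding strongly_convex_on_def p_def d2_def by auto
      also have "\<dots> \<le> t * e + (1 - t) * 0 - mumin * t * (1 - t) * d2"
      proof -
        have "t * fs j w \<le> t * e" using fsw j t0 by (simp add: mult_left_mono)
        moreover have "(1 - t) * fs j xstar \<le> (1 - t) * 0" using xsD j t1
          by (intro mult_left_mono) (auto simp: D_def)
        moreover have "mumin * (t * (1 - t) * d2) \<le> mu j * (t * (1 - t) * d2)"
          using mule[OF j] t0 t1 by (intro mult_right_mono) (auto simp: d2_def)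
        ultimately show ?thesis by (simp add: algebra_simps)
      qed
      also have "\<dots> = t * (e - (1 - t) * (mumin * d2))" by (simp add: algebra_simps)
      also have "\<dots> < 0" using t0 key by (simp add: mult_pos_neg)
      finally show ?thesis .
    qed
    have pint: "p \<in> interior D" using intD neg by auto
    have "\<forall>w\<in>D. f p \<le> f w" using fp fstar_le by fastforce
    hence "\<forall>w. f p \<le> f w" using loc_glob[OF f_convex pint] by blast
    thus False using no_abs_min_int pint by blast
  qed
  have P1: "Xstar = {xstar}"
  proof
    show "{xstar} \<subseteq> Xstar" using xstar by auto
    show "Xstar \<subseteq> {xstar}"
    proof
      fix w assume w: "w \<in> Xstar"
      have "mumin * (norm (w - xstar))\<^sup>2 \<le> 0"
        using w by (intro core) (auto simp: Xstar_def D_def)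
      hence "(norm (w - xstar))\<^sup>2 \<le> 0" using mupos by (simp add: mult_le_0_iff)
      thus "w \<in> {xstar}" by simp
    qed
  qed
  have P2: "norm (y i - xstar) \<le> sqrt (eps (kk i) / mumin) \<and>
          (\<forall>L. L-lipschitz_on UNIV f \<longrightarrow> \<bar>f (y i) - fstar\<bar> \<le> L * sqrt (eps (kk i) / mumin))"
    if i: "enat i < N" "F (y i) \<le> eps (kk i)" for i
  proof -
    have "enat i \<le> N" using i by simp
    hence fy: "f (y i) \<le> fstar" using run
      unfolding method11_run_def Let_def fstar_def D_def by auto
    have e0: "eps (kk i) \<ge> 0" using run unfolding method11_run_def Let_def by auto
    have fsy: "\<forall>j\<in>{1..m}. fs j (y i) \<le> eps (kk i)"
    proof
      fix j assume j: "j \<in> {1..m}"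
      have "fs j (y i) \<le> F (y i)" unfolding F_def using j by (intro Max_ge) auto
      thus "fs j (y i) \<le> eps (kk i)" using i by simp
    qed
    have "mumin * (norm (y i - xstar))\<^sup>2 \<le> eps (kk i)" using core[OF fy fsy e0] .
    hence "(norm (y i - xstar))\<^sup>2 \<le> eps (kk i) / mumin" using mupos by (simp add: field_simps)
    hence nb: "norm (y i - xstar) \<le> sqrt (eps (kk i) / mumin)" by (simp add: real_le_rsqrt)
    moreover have "\<bar>f (y i) - fstar\<bar> \<le> L * sqrt (eps (kk i) / mumin)"
      if L: "L-lipschitz_on UNIV f" for L
    proof -
      have "\<bar>f (y i) - fstar\<bar> = dist (f (y i)) (f xstar)" using fxs by (simp add: dist_real_def)
      also have "\<dots> \<le> L * dist (y i) xstar" using lipschitz_onD[OF L] by auto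
      also have "\<dots> \<le> L * sqrt (eps (kk i) / mumin)"
        using nb lipschitz_on_nonneg[OF L] by (intro mult_left_mono) (auto simp: dist_norm)
      finally show ?thesis .
    qed
    ultimately show ?thesis by blast
  qed
  show ?thesis using P1 P2 by blast
qed

end
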